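(* Let $\mathfrak A:\mathbb{R}^n\to\mathbb{R}^n$, $\mathfrak B:(\mathbb{R}^n)^*\to\mathbb{R}^n$ and $\mathfrak C:\mathbb{R}^n\to(\mathbb{R}^n)^*$ be linear maps with $\mathfrak B$ and $\mathfrak C$ symmetric, and consider on $[0,T]$ the constant symplectic system \[\begin{pmatrix}v\\ \alpha\end{pmatrix}'=\begin{pmatrix}\mathfrak A&\mathfrak B\\ \mathfrak C&-\mathfrak A^*\end{pmatrix}\begin{pmatrix}v\\ \alpha\end{pmatrix},\qquad (v,\alpha)\in\mathbb{R}^n\oplus(\mathbb{R}^n)^*.\] If $\mathfrak B$ is nonsingular, then the set of conjugate instants of the system in $\left]0,T\right]$ is finite. Conversely, if $\mathrm{Ker}(\mathfrak A^* )\cap\mathrm{Ker}(\mathfrak B)\neq\{0\}$, then every $t\in\left]0,T\right]$ is a conjugate instant.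
   Context: $\mathfrak B$ symmetric means $\mathfrak B^*=\mathfrak B$ under the identification $(\mathbb{R}^n)^{**}=\mathbb{R}^n$ (similarly for $\mathfrak C$); this is exactly the condition that the coefficient matrix lies in the Lie algebra of the symplectic group of $\omega((v,\alpha),(w,\beta))=\beta(v)-\alpha(w)$. An instant $t_0\in\left]0,T\right]$ is conjugate for the system if there exists a nontrivial solution $(v,\alpha)$ with $v(0)=v(t_0)=0$. *)

theory Defs
  imports "HOL-Analysis.Analysis"
begin

text \<open>Convention: the dual space (R^n)^* is identified with R^n via the standard
  basis; covectors are column vectors. Then a linear map A : R^n -> R^n is a matrix,
  its adjoint A^* is transpose A, and a map B : (R^n)^* -> R^n is symmetric iff
  transpose B = B (likewise for C : R^n -> (R^n)^*).\<close>

definition symmetric_mat :: "real^'n^'n \<Rightarrow> bool" where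
  "symmetric_mat M \<longleftrightarrow> transpose M = M"

definition symp_solution ::
  "real^'n^'n \<Rightarrow> real^'n^'n \<Rightarrow> real^'n^'n \<Rightarrow> real \<Rightarrow> (real \<Rightarrow> real^'n) \<Rightarrow> (real \<Rightarrow> real^'n) \<Rightarrow> bool"
  where
  "symp_solution A B C T v \<alpha> \<longleftrightarrow>
     (\<forall>t\<in>{0..T}.
        (v has_vector_derivative (A *v v t + B *v \<alpha> t)) (at t within {0..T}) \<and>
        (\<alpha> has_vector_derivative (C *v v t - transpose A *v \<alpha> t)) (at t within {0..T}))"

definition conjugate_instant ::
  "real^'n^'n \<Rightarrow> real^'n^'n \<Rightarrow> real^'n^'n \<Rightarrow> real \<Rightarrow> real \<Rightarrow> bool"
  where
  "conjugate_instant A B C T t0 \<longleftrightarrow>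
     t0 \<in> {0<..T} \<and>
     (\<exists>v \<alpha>. symp_solution A B C T v \<alpha> \<and>
        (\<exists>t\<in>{0..T}. v t \<noteq> 0 \<or> \<alpha> t \<noteq> 0) \<and>
        v 0 = 0 \<and> v t0 = 0)"

end

theory Submission imports Defs "HOL-Complex_Analysis.Complex_Analysis" begin



no_notation fps_nth (infixl \<open>$\<close> 75)

definition expbnd :: "(nat \<Rightarrow> 'a::real_normed_vector) \<Rightarrow> bool" where
  "expbnd a \<longleftrightarrow> (\<exists>M K. 0 \<le> K \<and> (\<forall>k. norm (a k) \<le> M * K ^ k))"

definition es :: "(nat \<Rightarrow> 'a::{real_normed_field,banach}) \<Rightarrow> 'a \<Rightarrow> 'a" where
  "es a z = (\<Sum>k. (a k / fact k) * z ^ k)"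

lemma expbnd_summable:
  fixes a :: "nat \<Rightarrow> 'a::{real_normed_field,banach}"
  assumes "expbnd a" shows "summable (\<lambda>k. (a k / fact k) * z ^ k)"
proof -
  obtain M K where K: "0 \<le> K" and b: "\<And>k. norm (a k) \<le> M * K ^ k"
    using assms unfolding expbnd_def by blast
  have s: "summable (\<lambda>k. M * (inverse (fact k) * (K * norm z) ^ k))"
    by (intro summable_mult summable_exp)
  show ?thesis
  proof (rule summable_comparison_test[OF _ s], intro exI allI impI)
    fix k :: nat
    have "norm ((a k / fact k) * z ^ k) = norm (a k) * inverse (fact k) * norm z ^ k"
      by (simp add: norm_mult norm_divide norm_power divide_inverse norm_inverse)
    also have "\<dots> \<le> M * K ^ k * inverse (fact k) * norm z ^ k"
      by (intro mult_right_mono b) auto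
    also have "\<dots> = M * (inverse (fact k) * (K * norm z) ^ k)"
      by (simp add: power_mult_distrib)
    finally show "norm ((a k / fact k) * z ^ k) \<le> M * (inverse (fact k) * (K * norm z) ^ k)" .
  qed
qed

lemma expbnd_Suc: assumes "expbnd a" shows "expbnd (\<lambda>k. a (Suc k))"
proof -
  obtain M K where K: "0 \<le> K" and b: "\<And>k. norm (a k) \<le> M * K ^ k"
    using assms unfolding expbnd_def by blast
  have "norm (a (Suc k)) \<le> (M * K) * K ^ k" for k using b[of "Suc k"] by (simp add: mult.assoc)
  then show ?thesis unfolding expbnd_def using K by blast
qed

lemma expbnd_add: assumes "expbnd a" "expbnd b" shows "expbnd (\<lambda>k. a k + b k)"
proof -
  obtain M K where K: "0 \<le> K" and b: "\<And>k. norm (a k) \<le> M * K ^ k"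
    using assms unfolding expbnd_def by blast
  obtain M' K' where K': "0 \<le> K'" and b': "\<And>k. norm (b k) \<le> M' * K' ^ k"
    using assms unfolding expbnd_def by blast
  have "norm (a k + b k) \<le> (\<bar>M\<bar> + \<bar>M'\<bar>) * (max K K') ^ k" for k
  proof -
    have "norm (a k + b k) \<le> M * K ^ k + M' * K' ^ k" using b[of k] b'[of k] by (meson add_mono norm_triangle_ineq order_trans)
    also have "\<dots> \<le> \<bar>M\<bar> * (max K K') ^ k + \<bar>M'\<bar> * (max K K') ^ k"
      by (intro add_mono mult_mono power_mono) (use K K' in auto)
    finally show ?thesis by (simp add: algebra_simps)
  qed
  then show ?thesis unfolding expbnd_def using K by (meson max.coboundedI1)
qed

lemma expbnd_cmult: fixes a :: "nat \<Rightarrow> 'a::real_normed_field" assumes "expbnd a" shows "expbnd (\<lambda>k. c * a k)"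
proof -
  obtain M K where K: "0 \<le> K" and b: "\<And>k. norm (a k) \<le> M * K ^ k"
    using assms unfolding expbnd_def by blast
  have "norm (c * a k) \<le> (norm c * M) * K ^ k" for k
    using mult_left_mono[OF b[of k] norm_ge_zero[of c]] by (simp add: norm_mult mult.assoc)
  then show ?thesis unfolding expbnd_def using K by blast
qed

lemma expbnd_sum: assumes "\<And>l. l \<in> S \<Longrightarrow> expbnd (a l)" shows "expbnd (\<lambda>k. \<Sum>l\<in>S. a l k)"
  using assms
proof (induction S rule: infinite_finite_induct)
  case (infinite A) then show ?case by (auto simp: expbnd_def intro!: exI[of _ 0])
next
  case empty then show ?case by (auto simp: expbnd_def intro!: exI[of _ 0])
next
  case (insert x F) then show ?case by (simp add: expbnd_add)
qed

lemma es_deriv: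
  fixes a :: "nat \<Rightarrow> 'a::{real_normed_field,banach}"
  assumes "expbnd a" shows "(es a has_field_derivative es (\<lambda>k. a (Suc k)) z) (at z)"
proof -
  have "((\<lambda>x. \<Sum>n. (a n / fact n) * x^n) has_field_derivative (\<Sum>n. diffs (\<lambda>n. a n / fact n) n * z^n)) (at z)"
    by (rule termdiffs_strong_converges_everywhere) (rule expbnd_summable[OF assms])
  moreover have "diffs (\<lambda>n. a n / fact n) n = a (Suc n) / fact n" for n
  proof -
    have "fact n \<noteq> (0::'a)" by simp
    moreover have "(1 + of_nat n :: 'a) \<noteq> 0" using of_nat_neq_0[of n] by simp
    ultimately show ?thesis unfolding diffs_def fact_Suc by (simp add: divide_simps)
  qed
  ultimately show ?thesis unfolding es_def[abs_def] by simp
qed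

lemma es_zero: "es a 0 = a 0" unfolding es_def by (subst powser_zero) simp

lemma es_add: assumes "expbnd a" "expbnd b" shows "es (\<lambda>k. a k + b k) z = es a z + es b z"
  unfolding es_def using expbnd_summable[OF assms(1)] expbnd_summable[OF assms(2)]
  by (simp add: add_divide_distrib distrib_right suminf_add)

lemma es_cmult: assumes "expbnd a" shows "es (\<lambda>k. c * a k) z = c * es a z"
proof -
  have "(\<lambda>k. (c * a k / fact k) * z ^ k) = (\<lambda>k. c * ((a k / fact k) * z ^ k))"
    by (simp add: field_simps)
  then show ?thesis unfolding es_def using suminf_mult[OF expbnd_summable[OF assms], of c z]
    by simp
qed

lemma es_sum: assumes "\<And>l. l \<in> S \<Longrightarrow> expbnd (a l)" shows "es (\<lambda>k. \<Sum>l\<in>S. a l k) z = (\<Sum>l\<in>S. es (a l) z)"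
  unfolding es_def using expbnd_summable[OF assms]
  by (simp add: sum_divide_distrib sum_distrib_right suminf_sum)

lemma es_of_real: assumes "expbnd a" shows "es (\<lambda>k. of_real (a k)) (of_real t) = (of_real (es a t) :: complex)"
proof -
  have "(of_real (\<Sum>k. (a k / fact k) * t ^ k) :: complex) = (\<Sum>k. of_real ((a k / fact k) * t ^ k))"
    by (rule suminf_of_real[OF expbnd_summable[OF assms, of t]])
  then show ?thesis unfolding es_def by (simp add: of_real_divide)
qed

lemma expbnd_of_real: assumes "expbnd (a :: nat \<Rightarrow> real)" shows "expbnd (\<lambda>k. (of_real (a k) :: complex))"
  using assms unfolding expbnd_def by simp




lemma vec_deriv:
  fixes f :: "real \<Rightarrow> real^'n"
  assumes "\<And>i. ((\<lambda>t. f t $ i) has_real_derivative D $ i) (at t within S)"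
  shows "(f has_vector_derivative D) (at t within S)"
  unfolding has_vector_derivative_def
proof (subst has_derivative_componentwise_within, intro ballI)
  fix b :: "real^'n" assume "b \<in> Basis"
  then obtain i where b: "b = axis i 1" by (auto simp: Basis_vec_def)
  have "((\<lambda>t. f t $ i) has_derivative (\<lambda>x. x * D $ i)) (at t within S)"
  proof -
    have "(\<lambda>x. x * D $ i) = (*) (D $ i)" by (auto simp: mult.commute)
    then show ?thesis using assms[of i] unfolding has_field_derivative_def by simp
  qed
  then show "((\<lambda>x. f x \<bullet> b) has_derivative (\<lambda>x. (x *\<^sub>R D) \<bullet> b)) (at t within S)"
    unfolding b by (simp add: inner_axis)
qed

lemma mat_vec_deriv:
  fixes M :: "real \<Rightarrow> real^'n^'n"
  assumes "\<And>i j. ((\<lambda>t. M t $ i $ j) has_real_derivative D $ i $ j) (at t)"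
  shows "((\<lambda>t. M t *v a) has_vector_derivative (D *v a)) (at t)"
proof (rule vec_deriv)
  fix i
  show "((\<lambda>t. (M t *v a) $ i) has_real_derivative (D *v a) $ i) (at t)"
    unfolding matrix_vector_mult_def vec_lambda_beta
    by (intro DERIV_sum DERIV_cmult_right assms)
qed




fun pq :: "real^'n^'n \<Rightarrow> real^'n^'n \<Rightarrow> real^'n^'n \<Rightarrow> nat \<Rightarrow> (real^'n^'n) \<times> (real^'n^'n)" where
  "pq A B C 0 = (mat 0, mat 1)"
| "pq A B C (Suc k) = (A ** fst (pq A B C k) + B ** snd (pq A B C k),
                       C ** fst (pq A B C k) - transpose A ** snd (pq A B C k))"

lemma entry_le_sum: "\<bar>M $ i $ j\<bar> \<le> (\<Sum>i\<in>UNIV. \<Sum>j\<in>UNIV. \<bar>(M::real^'n^'m) $ i $ j\<bar>)"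
proof -
  have "\<bar>M $ i $ j\<bar> \<le> (\<Sum>j\<in>UNIV. \<bar>M $ i $ j\<bar>)" by (rule member_le_sum) auto
  also have "\<dots> \<le> (\<Sum>i\<in>UNIV. \<Sum>j\<in>UNIV. \<bar>M $ i $ j\<bar>)" by (rule member_le_sum[where f="\<lambda>i. \<Sum>j\<in>UNIV. \<bar>M $ i $ j\<bar>"]) (auto intro: sum_nonneg)
  finally show ?thesis .
qed

lemma mm_bound:
  fixes M X :: "real^'n^'n"
  assumes "\<And>i j. \<bar>M $ i $ j\<bar> \<le> a" "\<And>i j. \<bar>X $ i $ j\<bar> \<le> c"
  shows "\<bar>(M ** X) $ i $ j\<bar> \<le> real CARD('n) * (a * c)"
proof -
  have a0: "0 \<le> a" using assms(1) abs_ge_zero order_trans by blast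
  have "\<bar>(M ** X) $ i $ j\<bar> = \<bar>\<Sum>l\<in>UNIV. M $ i $ l * X $ l $ j\<bar>"
    by (simp add: matrix_matrix_mult_def)
  also have "\<dots> \<le> (\<Sum>l\<in>UNIV. \<bar>M $ i $ l\<bar> * \<bar>X $ l $ j\<bar>)"
    by (metis (no_types, lifting) abs_mult sum.cong sum_abs)
  also have "\<dots> \<le> (\<Sum>l\<in>(UNIV::'n set). a * c)"
    by (intro sum_mono mult_mono assms a0) auto
  also have "\<dots> = real CARD('n) * (a * c)" by simp
  finally show ?thesis .
qed

lemma pq_bound:
  fixes A B C :: "real^'n^'n"
  obtains K where "0 \<le> K" "\<And>k i j. \<bar>fst (pq A B C k) $ i $ j\<bar> \<le> K ^ k \<and> \<bar>snd (pq A B C k) $ i $ j\<bar> \<le> K ^ k"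
proof -
  define m where "m = 1 + (\<Sum>i\<in>UNIV. \<Sum>j\<in>UNIV. \<bar>A $ i $ j\<bar>) + (\<Sum>i\<in>UNIV. \<Sum>j\<in>UNIV. \<bar>B $ i $ j\<bar>)
     + (\<Sum>i\<in>UNIV. \<Sum>j\<in>UNIV. \<bar>C $ i $ j\<bar>)"
  have s0: "0 \<le> (\<Sum>i\<in>UNIV. \<Sum>j\<in>UNIV. \<bar>M $ i $ j\<bar>)" for M :: "real^'n^'n" by (intro sum_nonneg) auto
  have mA: "\<bar>A $ i $ j\<bar> \<le> m" for i j using entry_le_sum[of A i j] s0[of B] s0[of C] unfolding m_def by linarith
  have mB: "\<bar>B $ i $ j\<bar> \<le> m" for i j using entry_le_sum[of B i j] s0[of A] s0[of C] unfolding m_def by linarith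
  have mC: "\<bar>C $ i $ j\<bar> \<le> m" for i j using entry_le_sum[of C i j] s0[of B] s0[of A] unfolding m_def by linarith
  have mAt: "\<bar>transpose A $ i $ j\<bar> \<le> m" for i j using mA by (simp add: transpose_def)
  define K where "K = 2 * real CARD('n) * m"
  have K0: "0 \<le> K" unfolding K_def using mA[of undefined undefined] by auto
  have "\<forall>i j. \<bar>fst (pq A B C k) $ i $ j\<bar> \<le> K ^ k \<and> \<bar>snd (pq A B C k) $ i $ j\<bar> \<le> K ^ k" for k
  proof (induction k)
    case 0 then show ?case by (simp add: mat_def)
  next
    case (Suc k)
    have p: "\<And>i j. \<bar>fst (pq A B C k) $ i $ j\<bar> \<le> K ^ k" and q: "\<And>i j. \<bar>snd (pq A B C k) $ i $ j\<bar> \<le> K ^ k"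
      using Suc by auto
    have e: "real CARD('n) * (m * K ^ k) + real CARD('n) * (m * K ^ k) = K ^ Suc k"
      unfolding K_def by (simp add: algebra_simps)
    show ?case
    proof (intro allI conjI)
      fix i j
      have "\<bar>fst (pq A B C (Suc k)) $ i $ j\<bar> \<le> \<bar>(A ** fst (pq A B C k)) $ i $ j\<bar> + \<bar>(B ** snd (pq A B C k)) $ i $ j\<bar>"
        by simp
      also have "\<dots> \<le> real CARD('n) * (m * K ^ k) + real CARD('n) * (m * K ^ k)"
        by (intro add_mono mm_bound mA mB p q)
      finally show "\<bar>fst (pq A B C (Suc k)) $ i $ j\<bar> \<le> K ^ Suc k" using e by linarith
      have "\<bar>snd (pq A B C (Suc k)) $ i $ j\<bar> \<le> \<bar>(C ** fst (pq A B C k)) $ i $ j\<bar> + \<bar>(transpose A ** snd (pq A B C k)) $ i $ j\<bar>"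
        by simp
      also have "\<dots> \<le> real CARD('n) * (m * K ^ k) + real CARD('n) * (m * K ^ k)"
        by (intro add_mono mm_bound mC mAt p q)
      finally show "\<bar>snd (pq A B C (Suc k)) $ i $ j\<bar> \<le> K ^ Suc k" using e by linarith
    qed
  qed
  then show ?thesis using that K0 by blast
qed

lemma pq_expbnd:
  "expbnd (\<lambda>k. fst (pq A B C k) $ i $ j)" "expbnd (\<lambda>k. snd (pq A B C k) $ i $ j)"
proof -
  obtain K where "0 \<le> K" "\<And>k i j. \<bar>fst (pq A B C k) $ i $ j\<bar> \<le> K ^ k \<and> \<bar>snd (pq A B C k) $ i $ j\<bar> \<le> K ^ k"
    using pq_bound[of A B C] by blast
  then show "expbnd (\<lambda>k. fst (pq A B C k) $ i $ j)" "expbnd (\<lambda>k. snd (pq A B C k) $ i $ j)"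
    unfolding expbnd_def by (metis mult_1 real_norm_def)+
qed

definition Pm :: "real^'n^'n \<Rightarrow> real^'n^'n \<Rightarrow> real^'n^'n \<Rightarrow> real \<Rightarrow> real^'n^'n" where
  "Pm A B C t = (\<chi> i j. es (\<lambda>k. fst (pq A B C k) $ i $ j) t)"
definition Qm :: "real^'n^'n \<Rightarrow> real^'n^'n \<Rightarrow> real^'n^'n \<Rightarrow> real \<Rightarrow> real^'n^'n" where
  "Qm A B C t = (\<chi> i j. es (\<lambda>k. snd (pq A B C k) $ i $ j) t)"

lemma Pm0: "Pm A B C 0 = mat 0" and Qm0: "Qm A B C 0 = mat 1"
  by (simp_all add: Pm_def Qm_def es_zero vec_eq_iff)

lemma es_mm:
  fixes M :: "real^'n^'n" and X :: "nat \<Rightarrow> real^'n^'n"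
  assumes "\<And>l. expbnd (\<lambda>k. X k $ l $ j)"
  shows "es (\<lambda>k. (M ** X k) $ i $ j) t = (M ** (\<chi> i j. es (\<lambda>k. X k $ i $ j) t)) $ i $ j"
proof -
  have "es (\<lambda>k. (M ** X k) $ i $ j) t = es (\<lambda>k. \<Sum>l\<in>UNIV. M $ i $ l * X k $ l $ j) t"
    by (simp add: matrix_matrix_mult_def)
  also have "\<dots> = (\<Sum>l\<in>UNIV. es (\<lambda>k. M $ i $ l * X k $ l $ j) t)"
    by (rule es_sum) (simp add: expbnd_cmult assms)
  also have "\<dots> = (\<Sum>l\<in>UNIV. M $ i $ l * es (\<lambda>k. X k $ l $ j) t)"
    by (intro sum.cong refl es_cmult assms)
  finally show ?thesis by (simp add: matrix_matrix_mult_def)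
qed

lemma expbnd_mm:
  fixes M :: "real^'n^'n" and X :: "nat \<Rightarrow> real^'n^'n"
  assumes "\<And>l. expbnd (\<lambda>k. X k $ l $ j)"
  shows "expbnd (\<lambda>k. (M ** X k) $ i $ j)"
  unfolding matrix_matrix_mult_def vec_lambda_beta
  by (intro expbnd_sum expbnd_cmult assms)

lemma Pm_deriv: "((\<lambda>t. Pm A B C t $ i $ j) has_real_derivative (A ** Pm A B C t + B ** Qm A B C t) $ i $ j) (at t)"
proof -
  have "((\<lambda>t. Pm A B C t $ i $ j) has_real_derivative es (\<lambda>k. fst (pq A B C (Suc k)) $ i $ j) t) (at t)"
    unfolding Pm_def vec_lambda_beta by (rule es_deriv[OF pq_expbnd(1)])
  also have "es (\<lambda>k. fst (pq A B C (Suc k)) $ i $ j) t = (A ** Pm A B C t + B ** Qm A B C t) $ i $ j"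
  proof -
    have "es (\<lambda>k. fst (pq A B C (Suc k)) $ i $ j) t
        = es (\<lambda>k. (A ** fst (pq A B C k)) $ i $ j + (B ** snd (pq A B C k)) $ i $ j) t" by simp
    also have "\<dots> = es (\<lambda>k. (A ** fst (pq A B C k)) $ i $ j) t + es (\<lambda>k. (B ** snd (pq A B C k)) $ i $ j) t"
      by (intro es_add expbnd_mm pq_expbnd)
    also have "\<dots> = (A ** Pm A B C t + B ** Qm A B C t) $ i $ j"
      unfolding Pm_def Qm_def by (simp add: es_mm pq_expbnd)
    finally show ?thesis .
  qed
  finally show ?thesis .
qed

lemma es_diff: assumes "expbnd a" "expbnd b" shows "es (\<lambda>k. a k - b k) z = es a z - es b z"
proof -
  have "es (\<lambda>k. a k + (-1) * b k) z = es a z + es (\<lambda>k. (-1) * b k) z"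
    by (intro es_add expbnd_cmult assms)
  also have "\<dots> = es a z + (-1) * es b z" using es_cmult[OF assms(2), of "-1" z] by simp
  finally show ?thesis by simp
qed

lemma Qm_deriv: "((\<lambda>t. Qm A B C t $ i $ j) has_real_derivative (C ** Pm A B C t - transpose A ** Qm A B C t) $ i $ j) (at t)"
proof -
  have "((\<lambda>t. Qm A B C t $ i $ j) has_real_derivative es (\<lambda>k. snd (pq A B C (Suc k)) $ i $ j) t) (at t)"
    unfolding Qm_def vec_lambda_beta by (rule es_deriv[OF pq_expbnd(2)])
  also have "es (\<lambda>k. snd (pq A B C (Suc k)) $ i $ j) t = (C ** Pm A B C t - transpose A ** Qm A B C t) $ i $ j"
  proof -
    have "es (\<lambda>k. snd (pq A B C (Suc k)) $ i $ j) t
        = es (\<lambda>k. (C ** fst (pq A B C k)) $ i $ j - (transpose A ** snd (pq A B C k)) $ i $ j) t" by simp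
    also have "\<dots> = es (\<lambda>k. (C ** fst (pq A B C k)) $ i $ j) t - es (\<lambda>k. (transpose A ** snd (pq A B C k)) $ i $ j) t"
      by (intro es_diff expbnd_mm pq_expbnd)
    also have "\<dots> = (C ** Pm A B C t - transpose A ** Qm A B C t) $ i $ j"
      unfolding Pm_def Qm_def by (simp add: es_mm pq_expbnd)
    finally show ?thesis .
  qed
  finally show ?thesis .
qed

lemma PQ_solution: "symp_solution A B C T (\<lambda>t. Pm A B C t *v a) (\<lambda>t. Qm A B C t *v a)"
  unfolding symp_solution_def
proof (intro ballI conjI)
  fix t
  show "((\<lambda>t. Pm A B C t *v a) has_vector_derivative (A *v (Pm A B C t *v a) + B *v (Qm A B C t *v a))) (at t within {0..T})"
    using mat_vec_deriv[where M="Pm A B C" and D="A ** Pm A B C t + B ** Qm A B C t" and t=t and a=a, OF Pm_deriv]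
    by (simp add: matrix_vector_mul_assoc matrix_vector_mult_add_rdistrib has_vector_derivative_at_within)
  show "((\<lambda>t. Qm A B C t *v a) has_vector_derivative (C *v (Pm A B C t *v a) - transpose A *v (Qm A B C t *v a))) (at t within {0..T})"
    using mat_vec_deriv[where M="Qm A B C" and D="C ** Pm A B C t - transpose A ** Qm A B C t" and t=t and a=a, OF Qm_deriv]
    by (simp add: matrix_vector_mul_assoc matrix_vector_mult_diff_rdistrib has_vector_derivative_at_within)
qed




lemma inner_self_deriv:
  fixes x :: "real \<Rightarrow> 'a::real_inner"
  assumes "(x has_vector_derivative x') (at s within S)"
  shows "((\<lambda>s. x s \<bullet> x s) has_real_derivative 2 * (x s \<bullet> x')) (at s within S)"
proof -
  have d: "(x has_derivative (\<lambda>h. h *\<^sub>R x')) (at s within S)"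
    using assms unfolding has_vector_derivative_def .
  have "((\<lambda>s. x s \<bullet> x s) has_derivative (\<lambda>h. x s \<bullet> (h *\<^sub>R x') + (h *\<^sub>R x') \<bullet> x s)) (at s within S)"
    by (rule has_derivative_inner[OF d d])
  moreover have "(\<lambda>h. x s \<bullet> (h *\<^sub>R x') + (h *\<^sub>R x') \<bullet> x s) = (*) (2 * (x s \<bullet> x'))"
    by (auto simp: inner_commute algebra_simps)
  ultimately show ?thesis unfolding has_field_derivative_def by simp
qed

lemma sol_diff:
  assumes "symp_solution A B C T v \<alpha>" "symp_solution A B C T w \<beta>"
  shows "symp_solution A B C T (\<lambda>t. v t - w t) (\<lambda>t. \<alpha> t - \<beta> t)"
  using assms unfolding symp_solution_def
  by (auto intro!: has_vector_derivative_diff[THEN has_vector_derivative_eq_rhs]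
           simp: matrix_vector_mult_diff_distrib algebra_simps)

lemma uniq:
  fixes A B C :: "real^'n^'n"
  assumes sol: "symp_solution A B C T v \<alpha>" and v0: "v 0 = 0" and a0: "\<alpha> 0 = 0"
    and t: "t \<in> {0..T}"
  shows "v t = 0 \<and> \<alpha> t = 0"
proof -
  obtain LA where LA: "\<And>x. norm (A *v x) \<le> norm x * LA" "LA > 0"
    using bounded_linear.pos_bounded[OF matrix_vector_mul_bounded_linear[of A]] by blast
  obtain LB where LB: "\<And>x. norm (B *v x) \<le> norm x * LB" "LB > 0"
    using bounded_linear.pos_bounded[OF matrix_vector_mul_bounded_linear[of B]] by blast
  obtain LC where LC: "\<And>x. norm (C *v x) \<le> norm x * LC" "LC > 0"
    using bounded_linear.pos_bounded[OF matrix_vector_mul_bounded_linear[of C]] by blast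
  obtain LT where LT: "\<And>x. norm (transpose A *v x) \<le> norm x * LT" "LT > 0"
    using bounded_linear.pos_bounded[OF matrix_vector_mul_bounded_linear[of "transpose A"]] by blast
  define L where "L = LA + LB + LC + LT"
  have L0: "L > 0" using LA LB LC LT unfolding L_def by simp
  define M where "M = 4 * L"
  have mle: "y * x \<le> L * y" if "x \<le> L" "0 \<le> y" for x y :: real
    using mult_left_mono[OF that] by (simp add: mult.commute)
  define dv where "dv s = A *v v s + B *v \<alpha> s" for s
  define da where "da s = C *v v s - transpose A *v \<alpha> s" for s
  define f where "f s = v s \<bullet> v s + \<alpha> s \<bullet> \<alpha> s" for s
  define g where "g s = exp (- M * s) * f s" for s
  have fd: "(f has_real_derivative (2 * (v s \<bullet> dv s) + 2 * (\<alpha> s \<bullet> da s))) (at s within {0..T})"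
    if "s \<in> {0..T}" for s
    unfolding f_def[abs_def] dv_def da_def
    using sol that unfolding symp_solution_def
    by (intro DERIV_add inner_self_deriv) auto
  have fbound: "2 * (v s \<bullet> dv s) + 2 * (\<alpha> s \<bullet> da s) \<le> M * f s" for s
  proof -
    let ?a = "norm (v s)" and ?b = "norm (\<alpha> s)"
    have n1: "norm (dv s) \<le> L * ?a + L * ?b"
    proof -
      have "norm (dv s) \<le> ?a * LA + ?b * LB" unfolding dv_def
        using LA(1)[of "v s"] LB(1)[of "\<alpha> s"] norm_triangle_le by (metis add_mono)
      also have "\<dots> \<le> L * ?a + L * ?b" using LA LB LC LT
        by (intro add_mono mle) (auto simp: L_def)
      finally show ?thesis .
    qed
    have n2: "norm (da s) \<le> L * ?a + L * ?b"
    proof -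
      have "norm (da s) \<le> norm (C *v v s) + norm (transpose A *v \<alpha> s)" unfolding da_def
        by (rule norm_triangle_ineq4)
      also have "\<dots> \<le> ?a * LC + ?b * LT" using LC(1)[of "v s"] LT(1)[of "\<alpha> s"] by (rule add_mono)
      also have "\<dots> \<le> L * ?a + L * ?b" using LA LB LC LT
        by (intro add_mono mle) (auto simp: L_def)
      finally show ?thesis .
    qed
    have "v s \<bullet> dv s \<le> ?a * (L * ?a + L * ?b)"
      by (rule order_trans[OF norm_cauchy_schwarz]) (intro mult_left_mono n1 norm_ge_zero)
    moreover have "\<alpha> s \<bullet> da s \<le> ?b * (L * ?a + L * ?b)"
      by (rule order_trans[OF norm_cauchy_schwarz]) (intro mult_left_mono n2 norm_ge_zero)
    moreover have fs: "f s = ?a^2 + ?b^2" unfolding f_def by (simp add: power2_norm_eq_inner)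
    moreover have "?a * (L * ?a + L * ?b) + ?b * (L * ?a + L * ?b) \<le> 2 * L * f s"
      unfolding fs
    proof -
      have "0 \<le> L * (?a - ?b)^2" using L0 by simp
      then show "?a * (L * ?a + L * ?b) + ?b * (L * ?a + L * ?b) \<le> 2 * L * (?a^2 + ?b^2)"
        by (simp add: power2_eq_square algebra_simps)
    qed
    ultimately have "v s \<bullet> dv s + \<alpha> s \<bullet> da s \<le> 2 * L * f s" by linarith
    then show ?thesis unfolding M_def by linarith
  qed
  have gd: "(g has_real_derivative (exp (- M * s) * (2 * (v s \<bullet> dv s) + 2 * (\<alpha> s \<bullet> da s)) + (- M * exp (- M * s)) * f s)) (at s within {0..T})"
    if "s \<in> {0..T}" for s
    unfolding g_def[abs_def]
    by (rule DERIV_mult'[OF _ fd[OF that], THEN DERIV_cong]) (auto intro!: derivative_eq_intros simp: algebra_simps)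
  show ?thesis
  proof (cases "t = 0")
    case True then show ?thesis using v0 a0 by simp
  next
    case False
    then have t0: "0 < t" "t \<le> T" using t by auto
    have cont: "continuous_on {0..t} g"
    proof -
      have "continuous_on {0..T} g"
        unfolding continuous_on_eq_continuous_within using gd DERIV_continuous by blast
      then show ?thesis by (rule continuous_on_subset) (use t0 in auto)
    qed
    have "g t \<le> g 0"
    proof (rule DERIV_nonpos_imp_decreasing_open[OF less_imp_le[OF t0(1)] _ cont])
      fix s assume s: "0 < s" "s < t"
      then have "at s within {0..T} = at s" using t0 by (intro at_within_Icc_at) auto
      then have "(g has_real_derivative (exp (- M * s) * (2 * (v s \<bullet> dv s) + 2 * (\<alpha> s \<bullet> da s)) + (- M * exp (- M * s)) * f s)) (at s)"
        using gd[of s] s t0 by auto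
      moreover have "exp (- M * s) * (2 * (v s \<bullet> dv s) + 2 * (\<alpha> s \<bullet> da s)) + (- M * exp (- M * s)) * f s \<le> 0"
      proof -
        have "exp (- M * s) * (2 * (v s \<bullet> dv s) + 2 * (\<alpha> s \<bullet> da s)) \<le> exp (- M * s) * (M * f s)"
          by (intro mult_left_mono fbound) auto
        then show ?thesis by (simp add: algebra_simps)
      qed
      ultimately show "\<exists>y. (g has_real_derivative y) (at s) \<and> y \<le> 0" by blast
    qed
    also have "g 0 = 0" unfolding g_def f_def using v0 a0 by simp
    finally have "f t \<le> 0" unfolding g_def by (simp add: mult_le_0_iff)
    moreover have "0 \<le> v t \<bullet> v t" "0 \<le> \<alpha> t \<bullet> \<alpha> t" by simp_all
    ultimately have "v t \<bullet> v t = 0" "\<alpha> t \<bullet> \<alpha> t = 0" unfolding f_def by linarith+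
    then show ?thesis by simp
  qed
qed




lemma conj_det:
  fixes A B C :: "real^'n^'n"
  assumes "conjugate_instant A B C T t0"
  shows "t0 \<in> {0..T} \<and> det (Pm A B C t0) = 0"
proof -
  obtain v \<alpha> where sol: "symp_solution A B C T v \<alpha>" and nt: "\<exists>t\<in>{0..T}. v t \<noteq> 0 \<or> \<alpha> t \<noteq> 0"
    and v0: "v 0 = 0" and vt: "v t0 = 0" and t0: "t0 \<in> {0<..T}"
    using assms unfolding conjugate_instant_def by blast
  define a where "a = \<alpha> 0"
  have sd: "symp_solution A B C T (\<lambda>t. v t - Pm A B C t *v a) (\<lambda>t. \<alpha> t - Qm A B C t *v a)"
    by (rule sol_diff[OF sol PQ_solution])
  have eq: "v t = Pm A B C t *v a \<and> \<alpha> t = Qm A B C t *v a" if "t \<in> {0..T}" for t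
    using uniq[OF sd _ _ that] v0 by (simp add: Pm0 Qm0 a_def)
  have "a \<noteq> 0"
  proof
    assume "a = 0"
    then show False using nt eq by auto
  qed
  moreover have "Pm A B C t0 *v a = 0" using eq[of t0] vt t0 by auto
  ultimately have "det (Pm A B C t0) = 0"
    using invertible_det_nz[of "Pm A B C t0"] matrix_left_invertible_ker[of "Pm A B C t0"]
    unfolding invertible_def by blast
  then show ?thesis using t0 by auto
qed

definition Pc :: "real^'n^'n \<Rightarrow> real^'n^'n \<Rightarrow> real^'n^'n \<Rightarrow> complex \<Rightarrow> complex^'n^'n" where
  "Pc A B C z = (\<chi> i j. es (\<lambda>k. complex_of_real (fst (pq A B C k) $ i $ j)) z)"

lemma Pc_holo: "(\<lambda>z. det (Pc A B C z)) holomorphic_on UNIV"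
proof -
  have e: "(\<lambda>z. Pc A B C z $ i $ j) holomorphic_on UNIV" for i j
    unfolding Pc_def vec_lambda_beta holomorphic_on_def field_differentiable_def
    using es_deriv[OF expbnd_of_real[OF pq_expbnd(1)]] by (blast intro: has_field_derivative_at_within)
  show ?thesis unfolding det_def
    by (intro holomorphic_on_sum holomorphic_on_mult holomorphic_on_const holomorphic_on_prod e)
qed

lemma Pc_real: "det (Pc A B C (of_real t)) = of_real (det (Pm A B C t))"
proof -
  have "Pc A B C (of_real t) $ i $ j = of_real (Pm A B C t $ i $ j)" for i j
    unfolding Pc_def Pm_def vec_lambda_beta by (rule es_of_real[OF pq_expbnd(1)])
  then show ?thesis unfolding det_def by (simp add: of_real_sum of_real_mult of_real_prod)
qed

lemma Pc0: "det (Pc A B C 0) = 0"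
proof -
  have "Pc A B C 0 = mat 0" by (simp add: Pc_def es_zero vec_eq_iff mat_def)
  then show ?thesis by (metis det_0)
qed

lemma exists_nonzero:
  fixes A B C :: "real^'n^'n"
  assumes "invertible B"
  shows "\<exists>t. det (Pm A B C t) \<noteq> 0"
proof -
  have PQ0: "A ** Pm A B C 0 + B ** Qm A B C 0 = B"
  proof -
    have "A ** mat 0 = 0" by (simp add: vec_eq_iff matrix_matrix_mult_def mat_def)
    then show ?thesis by (simp add: Pm0 Qm0 matrix_mul_rid)
  qed
  have lim: "((\<lambda>t. Pm A B C t $ i $ j / t) \<longlongrightarrow> B $ i $ j) (at 0)" for i j
    using Pm_deriv[of A B C i j 0] unfolding has_field_derivative_iff PQ0
    by (simp add: Pm0 mat_def)
  have "((\<lambda>t. det (\<chi> i j. Pm A B C t $ i $ j / t)) \<longlongrightarrow> det B) (at 0)"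
    unfolding det_def vec_lambda_beta by (intro tendsto_intros lim)
  moreover have "det B \<noteq> 0" using assms invertible_det_nz by blast
  ultimately have "eventually (\<lambda>t. det (\<chi> i j. Pm A B C t $ i $ j / t) \<noteq> 0) (at 0)"
    by (rule tendsto_imp_eventually_ne)
  then obtain d where d: "d > 0" and h: "\<And>x. x \<noteq> 0 \<Longrightarrow> dist x 0 < d \<Longrightarrow> det (\<chi> i j. Pm A B C x $ i $ j / x) \<noteq> 0"
    unfolding eventually_at by auto
  define x where "x = d / 2"
  have x: "x \<noteq> 0" "dist x 0 < d" using d unfolding x_def by auto
  have "(\<chi> i j. Pm A B C x $ i $ j / x) = (\<chi> i. (1 / x) *s (Pm A B C x $ i))"
    by (simp add: vec_eq_iff)
  then have "det (\<chi> i j. Pm A B C x $ i $ j / x) = (\<Prod>i\<in>(UNIV::'n set). 1 / x) * det (Pm A B C x)"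
    using det_rows_mul[of "\<lambda>i::'n. 1 / x" "\<lambda>i. Pm A B C x $ i"] by simp
  then show ?thesis using h[OF x] by auto
qed

theorem lemma5p7:
  fixes A B C :: "real^'n^'n" and T :: real
  assumes "symmetric_mat B" and "symmetric_mat C"
  shows "(invertible B \<longrightarrow> finite {t. conjugate_instant A B C T t})
       \<and> ({x. transpose A *v x = 0} \<inter> {x. B *v x = 0} \<noteq> {0}
           \<longrightarrow> (\<forall>t\<in>{0<..T}. conjugate_instant A B C T t))"
proof (intro conjI impI)
  assume inv: "invertible B"
  define F where "F z = det (Pc A B C z)" for z
  obtain t1 where t1: "det (Pm A B C t1) \<noteq> 0" using exists_nonzero[OF inv] by blast
  have nc: "\<not> F constant_on UNIV"
  proof
    assume "F constant_on UNIV"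
    then obtain c where "\<And>z. F z = c" unfolding constant_on_def by blast
    then have "F (of_real t1) = F 0" by simp
    then show False using t1 unfolding F_def by (metis Pc0 Pc_real of_real_eq_0_iff)
  qed
  have "finite {z \<in> of_real ` {0..T}. F z = 0}"
    by (rule holomorphic_compact_finite_zeros[OF _ open_UNIV connected_UNIV _ _ nc])
       (auto simp: F_def[abs_def] Pc_holo intro!: compact_continuous_image continuous_intros)
  moreover have "of_real ` {t. conjugate_instant A B C T t} \<subseteq> {z \<in> of_real ` {0..T}. F z = 0}"
    using conj_det unfolding F_def by (force simp: Pc_real)
  ultimately have "finite (of_real ` {t. conjugate_instant A B C T t} :: complex set)"
    by (rule finite_subset[rotated])
  then show "finite {t. conjugate_instant A B C T t}"
    by (rule finite_imageD) (auto intro: inj_onI)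
next
  assume ne: "{x. transpose A *v x = 0} \<inter> {x. B *v x = 0} \<noteq> {0}"
  have z: "0 \<in> {x. transpose A *v x = 0} \<inter> {x. B *v x = 0}" by simp
  obtain x where x: "transpose A *v x = 0" "B *v x = 0" "x \<noteq> 0"
  proof -
    have "\<exists>x\<in>{x. transpose A *v x = 0} \<inter> {x. B *v x = 0}. x \<noteq> 0"
    proof (rule ccontr)
      assume "\<not> ?thesis"
      then have "{x. transpose A *v x = 0} \<inter> {x. B *v x = 0} = {0}" using z by blast
      then show False using ne by blast
    qed
    then show ?thesis using that by blast
  qed
  show "\<forall>t\<in>{0<..T}. conjugate_instant A B C T t"
  proof
    fix t assume t: "t \<in> {0<..T}"
    have "symp_solution A B C T (\<lambda>_. 0) (\<lambda>_. x)"
      unfolding symp_solution_def using x by (auto intro: has_vector_derivative_const)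
    moreover have "\<exists>s\<in>{0..T}. (0::real^'n) \<noteq> 0 \<or> x \<noteq> 0" using t x by auto
    ultimately show "conjugate_instant A B C T t" unfolding conjugate_instant_def using t by blast
  qed
qed


end
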